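(* For every $N\ge1$ and $m\ge1$, $w^{St}_{\mathfrak{so}(N)}((1,2,\dots,m))=\frac{(N-1)^m+1-N}{N}$ if $m$ is odd, and $=\frac{(N-1)^m-1+N^2}{N}$ if $m$ is even.
   Context: For $1\le i\le N$, $\bar i=N+1-i$, $F_{ij}=E_{ij}-E_{\bar j\bar i}$ ($E_{ij}$ matrix units), spanning $\mathfrak{so}(N)$; for $\alpha\in\mathbb{S}_m$, $w_{\mathfrak{so}(N)}(\alpha)=\sum_{i_1,\dots,i_m=1}^N F_{i_1i_{\alpha(1)}}\cdots F_{i_mi_{\alpha(m)}}\in U(\mathfrak{so}(N))$, and $w^{St}_{\mathfrak{so}(N)}(\alpha)=\frac1N\operatorname{Tr}\rho(w_{\mathfrak{so}(N)}(\alpha))$ with $\rho$ the standard $N$-dimensional matrix representation extended to $U(\mathfrak{so}(N))$. *)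

theory Defs
  imports Complex_Main "HOL-Library.FuncSet"
begin

text \<open>N x N real matrices are represented as functions nat \<Rightarrow> nat \<Rightarrow> real,
  with row/column indices ranging over {1..N}.\<close>

definition mat_mult :: "nat \<Rightarrow> (nat \<Rightarrow> nat \<Rightarrow> real) \<Rightarrow> (nat \<Rightarrow> nat \<Rightarrow> real) \<Rightarrow> (nat \<Rightarrow> nat \<Rightarrow> real)" where
  "mat_mult N A B = (\<lambda>a b. \<Sum>c = 1..N. A a c * B c b)"

definition mat_id :: "nat \<Rightarrow> nat \<Rightarrow> real" where
  "mat_id = (\<lambda>a b. if a = b then 1 else 0)"

definition mat_trace :: "nat \<Rightarrow> (nat \<Rightarrow> nat \<Rightarrow> real) \<Rightarrow> real" where
  "mat_trace N A = (\<Sum>a = 1..N. A a a)"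

definition E_unit :: "nat \<Rightarrow> nat \<Rightarrow> nat \<Rightarrow> nat \<Rightarrow> real" where
  "E_unit i j = (\<lambda>a b. if a = i \<and> b = j then 1 else 0)"

definition bar :: "nat \<Rightarrow> nat \<Rightarrow> nat" where
  "bar N i = N + 1 - i"

text \<open>F_ij = E_ij - E_{bar j, bar i}, i.e. the image of F_ij in the standard representation.\<close>
definition F_so :: "nat \<Rightarrow> nat \<Rightarrow> nat \<Rightarrow> nat \<Rightarrow> nat \<Rightarrow> real" where
  "F_so N i j = (\<lambda>a b. E_unit i j a b - E_unit (bar N j) (bar N i) a b)"

definition mat_prod_list :: "nat \<Rightarrow> (nat \<Rightarrow> nat \<Rightarrow> real) list \<Rightarrow> (nat \<Rightarrow> nat \<Rightarrow> real)" where
  "mat_prod_list N As = foldr (mat_mult N) As mat_id"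

definition rho_w_so :: "nat \<Rightarrow> nat \<Rightarrow> (nat \<Rightarrow> nat) \<Rightarrow> (nat \<Rightarrow> nat \<Rightarrow> real)" where
  "rho_w_so N m \<alpha> = (\<lambda>a b. \<Sum>\<iota> \<in> PiE {1..m} (\<lambda>_. {1..N}).
      mat_prod_list N (map (\<lambda>k. F_so N (\<iota> k) (\<iota> (\<alpha> k))) [1..<m+1]) a b)"

definition w_St_so :: "nat \<Rightarrow> nat \<Rightarrow> (nat \<Rightarrow> nat) \<Rightarrow> real" where
  "w_St_so N m \<alpha> = mat_trace N (rho_w_so N m \<alpha>) / real N"

definition long_cycle :: "nat \<Rightarrow> nat \<Rightarrow> nat" where
  "long_cycle m k = (if k < m then k + 1 else 1)"

end

theory Submission
  imports Defs
begin

fun pp :: "nat \<Rightarrow> nat \<Rightarrow> nat list \<Rightarrow> nat \<Rightarrow> (nat \<Rightarrow> nat \<Rightarrow> real)" where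
  "pp N x [] j = mat_mult N (F_so N x j) mat_id"
| "pp N x (y#ys) j = mat_mult N (F_so N x y) (pp N y ys j)"

definition LL :: "nat \<Rightarrow> nat \<Rightarrow> nat list set" where
  "LL N n = {xs. set xs \<subseteq> {1..N} \<and> length xs = n}"

definition G :: "nat \<Rightarrow> nat \<Rightarrow> nat \<Rightarrow> nat \<Rightarrow> nat \<Rightarrow> nat \<Rightarrow> real" where
  "G N n i j a b = (\<Sum>ys\<in>LL N n. pp N i ys j a b)"

definition coef :: "nat \<Rightarrow> nat \<Rightarrow> real" where
  "coef N k = ((real N - 1)^k - (-1)^k) / real N"

definition Gf :: "nat \<Rightarrow> nat \<Rightarrow> nat \<Rightarrow> nat \<Rightarrow> nat \<Rightarrow> nat \<Rightarrow> real" where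
  "Gf N n i j a b = coef N (Suc n) * (if i = a \<and> j = b then 1 else 0)
     + (-1)^(Suc n) * (if even (Suc n) then (if i = j \<and> a = b then 1 else 0)
                        else (if j = bar N a \<and> b = bar N i then 1 else 0))"

lemma finite_LL: "finite (LL N n)"
  unfolding LL_def by (rule finite_lists_length_eq) simp

lemma LL_Suc: "LL N (Suc n) = (\<lambda>(y,ys). y#ys) ` ({1..N} \<times> LL N n)"
  unfolding LL_def by (auto simp: length_Suc_conv image_iff)

lemma LL_0: "LL N 0 = {[]}"
  unfolding LL_def by auto

lemma sum_LL_Suc:
  "(\<Sum>xs\<in>LL N (Suc n). g xs) = (\<Sum>y\<in>{1..N}. \<Sum>ys\<in>LL N n. g (y#ys))"
proof -
  have inj: "inj_on (\<lambda>(y,ys). y#ys) ({1..N} \<times> LL N n)"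
    by (auto simp: inj_on_def)
  show ?thesis
    unfolding LL_Suc sum.reindex[OF inj]
    by (simp add: sum.cartesian_product split_def)
qed

lemma ifm: "(if P then 1 else 0) * (x::real) = (if P then x else 0)"
  by simp

lemma bar_inv: "a \<in> {1..N} \<Longrightarrow> bar N (bar N a) = a"
  by (auto simp: bar_def)
lemma bar_range: "a \<in> {1..N} \<Longrightarrow> bar N a \<in> {1..N}"
  by (auto simp: bar_def)
lemma bar_eq: "a \<in> {1..N} \<Longrightarrow> b \<in> {1..N} \<Longrightarrow> (bar N a = bar N b) = (a = b)"
  by (auto simp: bar_def)
lemma bar_swap: "a \<in> {1..N} \<Longrightarrow> b \<in> {1..N} \<Longrightarrow> (a = bar N b) = (b = bar N a)"
  by (auto simp: bar_def)

lemma G_Suc: "G N (Suc n) i j a b = (\<Sum>y\<in>{1..N}. \<Sum>c\<in>{1..N}. F_so N i y a c * G N n y j c b)"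
proof -
  have "G N (Suc n) i j a b = (\<Sum>y\<in>{1..N}. \<Sum>ys\<in>LL N n. \<Sum>c\<in>{1..N}. F_so N i y a c * pp N y ys j c b)"
    unfolding G_def sum_LL_Suc by (simp add: mat_mult_def)
  also have "\<dots> = (\<Sum>y\<in>{1..N}. \<Sum>c\<in>{1..N}. F_so N i y a c * G N n y j c b)"
    unfolding G_def by (simp add: sum_distrib_left sum.swap[of _ "LL N n"])
  finally show ?thesis .
qed

lemma F_entry: "F_so N i y a c = (if a = i \<and> c = y then 1 else 0) - (if a = bar N y \<and> c = bar N i then 1 else 0)"
  by (simp add: F_so_def E_unit_def)

lemma sum_ind1: "(\<Sum>y\<in>{1..(N::nat)}. \<Sum>c\<in>{1..N}. (if a = i \<and> c = y then 1 else 0) * (h y c::real))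
   = (if a = i then (\<Sum>y\<in>{1..N}. h y y) else 0)"
proof -
  have "(\<Sum>c\<in>{1..N}. (if c = y then h y c else 0)) = h y y" if "y \<in> {1..N}" for y
  proof -
    have "(\<Sum>c\<in>{1..N}. (if c = y then h y c else 0)) = (\<Sum>c\<in>{1..N}. (if c = y then h y y else 0))"
      by (rule sum.cong) auto
    also have "\<dots> = h y y" using that by (subst sum.delta) auto
    finally show ?thesis .
  qed
  then show ?thesis by (simp add: ifm)
qed

lemma sum_ind2:
  fixes N :: nat
  assumes "a \<in> {1..N}" "i \<in> {1..N}"
  shows "(\<Sum>y\<in>{1..N}. \<Sum>c\<in>{1..N}. (if a = bar N y \<and> c = bar N i then 1 else 0) * (h y c::real))
   = h (bar N a) (bar N i)"
proof -
  have "(\<Sum>y\<in>{1..N}. \<Sum>c\<in>{1..N}. (if a = bar N y \<and> c = bar N i then 1 else 0) * (h y c::real))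
     = (\<Sum>y\<in>{1..N}. if y = bar N a then h y (bar N i) else 0)"
  proof (rule sum.cong[OF refl])
    fix y assume y: "y \<in> {1..N}"
    have e: "(a = bar N y) = (y = bar N a)" using bar_swap[OF y assms(1)] by auto
    show "(\<Sum>c\<in>{1..N}. (if a = bar N y \<and> c = bar N i then 1 else 0) * h y c) = (if y = bar N a then h y (bar N i) else 0)"
      using bar_range[OF assms(2)] by (simp add: e ifm)
  qed
  also have "\<dots> = h (bar N a) (bar N i)" using bar_range[OF assms(1)] by simp
  finally show ?thesis .
qed

lemma G_formula:
  assumes "i \<in> {1..N}" "j \<in> {1..N}" "a \<in> {1..N}" "b \<in> {1..N}"
  shows "G N n i j a b = Gf N n i j a b"
  using assms
proof (induction n arbitrary: i j a b)
  case 0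
  have "G N 0 i j a b = F_so N i j a b"
    using 0 by (simp add: G_def LL_0 mat_mult_def mat_id_def if_distrib cong: if_cong)
  then show ?case using 0
    by (auto simp: F_entry Gf_def coef_def bar_swap)
next
  case (Suc n)
  have IH: "\<And>y c. y \<in> {1..N} \<Longrightarrow> c \<in> {1..N} \<Longrightarrow> G N n y j c b = Gf N n y j c b"
    using Suc by blast
  have "G N (Suc n) i j a b = (\<Sum>y\<in>{1..N}. \<Sum>c\<in>{1..N}. F_so N i y a c * Gf N n y j c b)"
    unfolding G_Suc by (intro sum.cong refl) (simp add: IH)
  also have "\<dots> = (\<Sum>y\<in>{1..N}. \<Sum>c\<in>{1..N}. (if a = i \<and> c = y then 1 else 0) * Gf N n y j c b)
      - (\<Sum>y\<in>{1..N}. \<Sum>c\<in>{1..N}. (if a = bar N y \<and> c = bar N i then 1 else 0) * Gf N n y j c b)"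
    unfolding F_entry by (simp add: left_diff_distrib sum_subtractf)
  also have "\<dots> = (if a = i then (\<Sum>y\<in>{1..N}. Gf N n y j y b) else 0) - Gf N n (bar N a) j (bar N i) b"
    unfolding sum_ind1 sum_ind2[OF Suc.prems(3) Suc.prems(1)] ..
  also have "(\<Sum>y\<in>{1..N}. Gf N n y j y b) = real N * coef N (Suc n) * (if j = b then 1 else 0)
      + (-1)^(Suc n) * (if j = b then 1 else 0)"
  proof -
    have s1: "(\<Sum>y\<in>{1..N}. if even (Suc n) then (if y = j \<and> y = b then 1 else 0)
                        else (if j = bar N y \<and> b = bar N y then 1 else (0::real))) = (if j = b then 1 else 0)"
    proof (cases "even (Suc n)")
      case True
      have "(\<Sum>y\<in>{1..N}. (if y = j \<and> y = b then 1 else (0::real)))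
          = (\<Sum>y\<in>{1..N}. if y = j then (if j = b then 1 else 0) else 0)"
        by (intro sum.cong refl) auto
      also have "\<dots> = (if j = b then 1 else 0)" using Suc.prems(2) by simp
      finally show ?thesis using True by simp
    next
      case False
      have "(\<Sum>y\<in>{1..N}. (if j = bar N y \<and> b = bar N y then 1 else (0::real)))
          = (\<Sum>y\<in>{1..N}. if y = bar N j then (if j = b then 1 else 0) else 0)"
        by (intro sum.cong refl) (use Suc.prems bar_swap bar_inv in auto)
      also have "\<dots> = (if j = b then 1 else 0)" using bar_range[OF Suc.prems(2)] by simp
      finally show ?thesis using False by simp
    qed
    have "(\<Sum>y\<in>{1..N}. Gf N n y j y b) = (\<Sum>y\<in>{1..N}. coef N (Suc n) * (if j = b then 1 else 0)) +
        (-1)^(Suc n) * (\<Sum>y\<in>{1..N}. if even (Suc n) then (if y = j \<and> y = b then 1 else 0)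
                        else (if j = bar N y \<and> b = bar N y then 1 else (0::real)))"
      unfolding Gf_def sum.distrib sum_distrib_left by (intro arg_cong2[where f="(+)"] sum.cong refl) auto
    then show ?thesis using s1 by simp
  qed
  finally have E: "G N (Suc n) i j a b = (if a = i then real N * coef N (Suc n) * (if j = b then 1 else 0)
      + (-1)^(Suc n) * (if j = b then 1 else 0) else 0) - Gf N n (bar N a) j (bar N i) b" .
  have cs: "real N * coef N (Suc n) + (-1)^(Suc n) - coef N (Suc n) = coef N (Suc (Suc n))"
    using Suc.prems(1) by (auto simp: coef_def field_simps)
  have bi: "(bar N a = bar N i) = (a = i)" using bar_eq Suc.prems by blast
  have bb: "bar N (bar N a) = a" "bar N (bar N i) = i" using bar_inv Suc.prems by auto
  show ?case
  proof (cases "even (Suc n)")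
    case True
    then show ?thesis unfolding E Gf_def using cs bb
      by (auto simp: bi algebra_simps)
  next
    case False
    then show ?thesis unfolding E Gf_def using cs bb
      by (auto simp: bi algebra_simps)
  qed
qed

lemma pp_list:
  "mat_prod_list N (map (\<lambda>k. F_so N ((x#ys)!k) ((ys@[j])!k)) [0..<Suc (length ys)]) = pp N x ys j"
proof (induction ys arbitrary: x)
  case Nil
  then show ?case by (simp add: mat_prod_list_def)
next
  case (Cons y ys)
  have "map (\<lambda>k. F_so N ((x#y#ys)!k) (((y#ys)@[j])!k)) [0..<Suc (length (y#ys))]
     = F_so N x y # map (\<lambda>k. F_so N ((y#ys)!k) ((ys@[j])!k)) [0..<Suc (length ys)]"
    by (simp only: map_upt_Suc length_Cons) simp
  then have "mat_prod_list N (map (\<lambda>k. F_so N ((x#y#ys)!k) (((y#ys)@[j])!k)) [0..<Suc (length (y#ys))])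
     = mat_mult N (F_so N x y) (mat_prod_list N (map (\<lambda>k. F_so N ((y#ys)!k) ((ys@[j])!k)) [0..<Suc (length ys)]))"
    unfolding mat_prod_list_def by (simp only: foldr_Cons comp_apply)
  then show ?case using Cons.IH[of y] by (simp only: pp.simps)
qed

lemma cyc_list:
  assumes "length xs = m" "m \<ge> 1"
  shows "mat_prod_list N (map (\<lambda>k. F_so N (xs!k) (xs!((k+1) mod m))) [0..<m]) = pp N (hd xs) (tl xs) (hd xs)"
proof -
  obtain x ys where xs: "xs = x#ys" using assms by (cases xs) auto
  have m: "m = Suc (length ys)" using assms xs by simp
  have "map (\<lambda>k. F_so N (xs!k) (xs!((k+1) mod m))) [0..<m]
      = map (\<lambda>k. F_so N ((x#ys)!k) ((ys@[x])!k)) [0..<Suc (length ys)]"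
  proof (rule map_cong)
    show "[0..<m] = [0..<Suc (length ys)]" using m by simp
  next
    fix k assume "k \<in> set [0..<Suc (length ys)]"
    then have k: "k < Suc (length ys)" by (metis atLeastLessThan_iff set_upt)
    show "F_so N (xs!k) (xs!((k+1) mod m)) = F_so N ((x#ys)!k) ((ys@[x])!k)"
    proof (cases "k < length ys")
      case True
      then show ?thesis using xs m by (simp add: nth_append)
    next
      case False
      then have "k = length ys" using k by simp
      then show ?thesis using xs m by simp
    qed
  qed
  then show ?thesis using pp_list[of N x ys x] xs by simp
qed

definition gl :: "nat \<Rightarrow> nat list \<Rightarrow> nat \<Rightarrow> nat" where
  "gl m xs = (\<lambda>k. if k \<in> {1..m} then xs!(k-1) else undefined)"

lemma gl_bij: "bij_betw (gl m) (LL N m) (PiE {1..m} (\<lambda>_. {1..N}))"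
proof (rule bij_betwI')
  fix xs ys assume "xs \<in> LL N m" "ys \<in> LL N m"
  then have l: "length xs = m" "length ys = m" by (auto simp: LL_def)
  show "(gl m xs = gl m ys) = (xs = ys)"
  proof
    assume e: "gl m xs = gl m ys"
    show "xs = ys"
    proof (rule nth_equalityI)
      show "length xs = length ys" using l by simp
    next
      fix k assume "k < length xs"
      then have "gl m xs (Suc k) = gl m ys (Suc k)" using e by simp
      then show "xs!k = ys!k" using \<open>k < length xs\<close> l by (simp add: gl_def)
    qed
  qed simp
next
  fix xs assume "xs \<in> LL N m"
  then have "length xs = m" "set xs \<subseteq> {1..N}" by (auto simp: LL_def)
  then show "gl m xs \<in> PiE {1..m} (\<lambda>_. {1..N})"
  proof (intro PiE_I)
    fix k assume "k \<in> {1..m}"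
    then have "k - 1 < length xs" using \<open>length xs = m\<close> by auto
    then have "xs!(k-1) \<in> {1..N}" using \<open>set xs \<subseteq> {1..N}\<close> nth_mem by blast
    then show "gl m xs k \<in> {1..N}" using \<open>k \<in> {1..m}\<close> by (simp add: gl_def)
  next
    fix k assume "k \<notin> {1..m}"
    then show "gl m xs k = undefined" by (simp only: gl_def if_False)
  qed
next
  fix f assume f: "f \<in> PiE {1..m} (\<lambda>_. {1..N})"
  define xs where "xs = map f [1..<m+1]"
  have "xs \<in> LL N m" using f by (auto simp: xs_def LL_def PiE_def Pi_def)
  moreover have "f = gl m xs"
  proof
    fix k show "f k = gl m xs k"
    proof (cases "k \<in> {1..m}")
      case True
      then have "xs!(k-1) = f (1 + (k-1))" unfolding xs_def by (subst nth_map_upt) auto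
      then show ?thesis using True by (simp add: gl_def)
    next
      case False
      have "f k = undefined" using f False by (auto simp: PiE_def extensional_def)
      then show ?thesis using False by (simp only: gl_def if_False)
    qed
  qed
  ultimately show "\<exists>xs\<in>LL N m. f = gl m xs" by blast
qed

lemma map_cycle:
  assumes "length xs = m"
  shows "map (\<lambda>k. F_so N (gl m xs k) (gl m xs (long_cycle m k))) [1..<m+1]
       = map (\<lambda>k. F_so N (xs!k) (xs!((k+1) mod m))) [0..<m]"
proof -
  have u: "[1..<m+1] = map Suc [0..<m]" by (simp add: map_Suc_upt)
  show ?thesis unfolding u map_map
  proof (rule map_cong[OF refl])
    fix k assume "k \<in> set [0..<m]"
    then have k: "k < m" by (metis atLeastLessThan_iff set_upt)
    show "((\<lambda>k. F_so N (gl m xs k) (gl m xs (long_cycle m k))) \<circ> Suc) k = F_so N (xs!k) (xs!((k+1) mod m))"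
    proof (cases "Suc k < m")
      case True
      then show ?thesis using k by (simp add: gl_def long_cycle_def)
    next
      case False
      then have mk: "m = Suc k" using k by simp
      show ?thesis by (simp add: gl_def long_cycle_def mk)
    qed
  qed
qed

lemma rho_eq:
  assumes "m = Suc n"
  shows "rho_w_so N m (long_cycle m) a b = (\<Sum>y\<in>{1..N}. G N n y y a b)"
proof -
  have "rho_w_so N m (long_cycle m) a b
     = (\<Sum>xs\<in>LL N m. mat_prod_list N (map (\<lambda>k. F_so N (gl m xs k) (gl m xs (long_cycle m k))) [1..<m+1]) a b)"
    unfolding rho_w_so_def by (rule sum.reindex_bij_betw[OF gl_bij, symmetric])
  also have "\<dots> = (\<Sum>xs\<in>LL N m. pp N (hd xs) (tl xs) (hd xs) a b)"
  proof (rule sum.cong[OF refl])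
    fix xs assume "xs \<in> LL N m"
    then have l: "length xs = m" by (simp add: LL_def)
    show "mat_prod_list N (map (\<lambda>k. F_so N (gl m xs k) (gl m xs (long_cycle m k))) [1..<m+1]) a b
        = pp N (hd xs) (tl xs) (hd xs) a b"
      using map_cycle[OF l] cyc_list[OF l] assms by simp
  qed
  also have "\<dots> = (\<Sum>y\<in>{1..N}. G N n y y a b)"
    unfolding assms sum_LL_Suc G_def by simp
  finally show ?thesis .
qed

lemma trace_sum:
  assumes "N \<ge> 1"
  shows "(\<Sum>a\<in>{1..N}. \<Sum>y\<in>{1..N}. Gf N n y y a a)
    = real N * coef N (Suc n) + (-1)^(Suc n) * (if even (Suc n) then real N * real N else real N)"
proof -
  have A: "(\<Sum>a\<in>{1..N}. \<Sum>y\<in>{1..N}. (if y = a then 1 else 0::real)) = real N"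
  proof -
    have "(\<Sum>a\<in>{1..N}. \<Sum>y\<in>{1..N}. (if y = a then 1 else 0::real)) = (\<Sum>a\<in>{1..N}. 1::real)"
      by (rule sum.cong[OF refl]) simp
    then show ?thesis by simp
  qed
  have B: "(\<Sum>a\<in>{1..N}. \<Sum>y\<in>{1..N}. (if y = bar N a \<and> a = bar N y then 1 else 0::real)) = real N"
  proof -
    have "(\<Sum>a\<in>{1..N}. \<Sum>y\<in>{1..N}. (if y = bar N a \<and> a = bar N y then 1 else 0::real)) = (\<Sum>a\<in>{1..N}. 1::real)"
    proof (rule sum.cong[OF refl])
      fix a assume a: "a \<in> {1..N}"
      have "(\<Sum>y\<in>{1..N}. (if y = bar N a \<and> a = bar N y then 1 else 0::real))
          = (\<Sum>y\<in>{1..N}. (if y = bar N a then 1 else 0::real))"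
        by (rule sum.cong[OF refl]) (use a bar_inv in auto)
      also have "\<dots> = 1" using bar_range[OF a] by simp
      finally show "(\<Sum>y\<in>{1..N}. (if y = bar N a \<and> a = bar N y then 1 else 0::real)) = 1" .
    qed
    then show ?thesis by simp
  qed
  have "(\<Sum>a\<in>{1..N}. \<Sum>y\<in>{1..N}. Gf N n y y a a)
     = coef N (Suc n) * (\<Sum>a\<in>{1..N}. \<Sum>y\<in>{1..N}. (if y = a then 1 else 0::real))
       + (-1)^(Suc n) * (\<Sum>a\<in>{1..N}. \<Sum>y\<in>{1..N}. (if even (Suc n) then 1
            else (if y = bar N a \<and> a = bar N y then 1 else 0::real)))"
  proof -
    have "Gf N n y y a a = coef N (Suc n) * (if y = a then 1 else 0::real)
       + (-1)^(Suc n) * (if even (Suc n) then 1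
            else (if y = bar N a \<and> a = bar N y then 1 else 0::real))" for y a
      unfolding Gf_def by simp
    then show ?thesis by (simp only: sum.distrib sum_distrib_left)
  qed
  also have "\<dots> = real N * coef N (Suc n) + (-1)^(Suc n) * (if even (Suc n) then real N * real N else real N)"
    using A B by (cases "even (Suc n)") auto
  finally show ?thesis .
qed

theorem corollary13:
  fixes N m :: nat
  assumes "N \<ge> 1" and "m \<ge> 1"
  shows "w_St_so N m (long_cycle m) =
    (if odd m then ((real N - 1) ^ m + 1 - real N) / real N
     else ((real N - 1) ^ m - 1 + (real N)^2) / real N)"
proof -
  obtain n where m: "m = Suc n" using assms(2) by (cases m) auto
  have "mat_trace N (rho_w_so N m (long_cycle m)) = (\<Sum>a\<in>{1..N}. \<Sum>y\<in>{1..N}. G N n y y a a)"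
    unfolding mat_trace_def rho_eq[OF m] ..
  also have "\<dots> = (\<Sum>a\<in>{1..N}. \<Sum>y\<in>{1..N}. Gf N n y y a a)"
    by (intro sum.cong refl G_formula) auto
  also have "\<dots> = real N * coef N m + (-1)^m * (if even m then real N * real N else real N)"
    unfolding trace_sum[OF assms(1)] m ..
  finally have T: "mat_trace N (rho_w_so N m (long_cycle m)) = real N * coef N m + (-1)^m * (if even m then real N * real N else real N)" .
  have N0: "real N \<noteq> 0" using assms(1) by simp
  show ?thesis
    unfolding w_St_so_def T coef_def using N0
    by (cases "even m") (auto simp: power2_eq_square field_simps)
qed

end
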